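(* Let $\mathcal{X}\subseteq\mathbb{R}^d$ and let $\mathcal{M}$ be a mechanism on weighted data sets admitting a weighted distinguishability profile $\epsilon\colon[1,\infty)\times\mathcal{X}\to\mathbb{R}_{\ge0}$ that is differentiable in $w$, with $\epsilon'(w,\mathbf{x})=\partial\epsilon(w,\mathbf{x})/\partial w$. Let $\widetilde{\mathcal{M}}(\{\mathbf{x}_i\}_{i=1}^n)=\mathcal{M}(\{(1,\mathbf{x}_i)\}_{i=1}^n)$ be its unweighted counterpart and $\tilde\epsilon(\mathbf{x})=\epsilon(1,\mathbf{x})$. Then there is a Poisson importance sampler $S$ such that the following holds, where $\psi$ denotes the distinguishability profile of $\mathcal{M}\circ S$ given by $\psi(\mathbf{x})=\log\big(1+q(\mathbf{x})(e^{\epsilon(1/q(\mathbf{x}),\mathbf{x})}-1)\big)$ with $q$ the selection-probability function of $S$: for any $\mathbf{x}\in\mathcal{X}$, if $\epsilon'(1,\mathbf{x})<1-e^{-\epsilon(1,\mathbf{x})}$, then $\psi(\mathbf{x})<\tilde\epsilon(\mathbf{x})$.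
   Context: A weighted data set is a finite set $\{(w_i,\mathbf{x}_i)\}$ with $w_i\ge1$, $\mathbf{x}_i\in\mathcal{X}$. Distributions $P,Q$ are $\epsilon$-indistinguishable if $P(Y)\le e^\epsilon Q(Y)$ and $Q(Y)\le e^\epsilon P(Y)$ for all measurable $Y$. A weighted distinguishability profile of $\mathcal{M}$ is a function $\epsilon\colon[1,\infty)\times\mathcal{X}\to\mathbb{R}_{\ge0}$ such that for every weighted data set $\mathcal{S}$ and every $(w',\mathbf{x}')$, $\mathcal{M}(\mathcal{S})$ and $\mathcal{M}(\mathcal{S}\cup\{(w',\mathbf{x}')\})$ are $\epsilon(w',\mathbf{x}')$-indistinguishable. A Poisson importance sampler for a function $q\colon\mathcal{X}\to(0,1]$ maps $\mathcal{D}=\{\mathbf{x}_1,\dots,\mathbf{x}_n\}$ to $\{(1/q(\mathbf{x}_i),\mathbf{x}_i)\mid\gamma_i=1\}$ with $\gamma_i$ independent Bernoulli$(q(\mathbf{x}_i))$. A distinguishability profile $\psi$ of an unweighted mechanism $\mathcal{A}$ means $\mathcal{A}(\mathcal{D})$ and $\mathcal{A}(\mathcal{D}\cup\{\mathbf{x}\})$ are $\psi(\mathbf{x})$-indistinguishable for all data sets $\mathcal{D}$ and points $\mathbf{x}$; it is known that the stated $\psi$ is such a profile of $\mathcal{M}\circ S$. *)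

theory Defs
  imports "HOL-Probability.Probability"
begin

definition weighted_dataset :: "'x set \<Rightarrow> (real \<times> 'x) set \<Rightarrow> bool" where
  "weighted_dataset X S \<longleftrightarrow> finite S \<and> (\<forall>(w, x) \<in> S. 1 \<le> w \<and> x \<in> X)"

definition indist :: "real \<Rightarrow> 'y measure \<Rightarrow> 'y measure \<Rightarrow> bool" where
  "indist e P Q \<longleftrightarrow> sets P = sets Q \<and>
     (\<forall>Y \<in> sets P. measure P Y \<le> exp e * measure Q Y \<and> measure Q Y \<le> exp e * measure P Y)"

definition weighted_profile ::
    "'x set \<Rightarrow> ((real \<times> 'x) set \<Rightarrow> 'y measure) \<Rightarrow> (real \<Rightarrow> 'x \<Rightarrow> real) \<Rightarrow> bool" where
  "weighted_profile X M eps \<longleftrightarrow>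
     (\<forall>S w' x'. weighted_dataset X S \<and> 1 \<le> w' \<and> x' \<in> X \<longrightarrow>
        indist (eps w' x') (M S) (M (S \<union> {(w', x')})))"

end

theory Submission
  imports Defs
begin

lemma key:
  fixes e :: "real \<Rightarrow> real" and d :: real
  assumes nn: "\<And>w. 1 \<le> w \<Longrightarrow> 0 \<le> e w"
    and der: "(e has_real_derivative d) (at 1 within {1..})"
    and c: "d < 1 - exp (- e 1)"
  shows "\<exists>w>1. ln (1 + (1 / w) * (exp (e w) - 1)) < e 1"
proof -
  define a where "a = e 1"
  define h where "h = (\<lambda>w. w * exp a - w - exp (e w) + 1)"
  have hd: "(h has_real_derivative (exp a - 1 - exp (e 1) * d)) (at 1 within {1..})"
    unfolding h_def
    by (auto intro!: derivative_eq_intros der)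
  have "exp a * d < exp a * (1 - exp (- a))"
    using c a_def by simp
  also have "\<dots> = exp a - 1" by (simp add: algebra_simps exp_minus)
  finally have pos: "0 < exp a - 1 - exp (e 1) * d" using a_def by simp
  obtain r where r: "r > 0" "\<And>t. t > 0 \<Longrightarrow> 1 + t \<in> {1..} \<Longrightarrow> t < r \<Longrightarrow> h 1 < h (1 + t)"
    using has_real_derivative_pos_inc_right[OF hd pos] by blast
  define w where "w = 1 + r / 2"
  have w1: "w > 1" using r by (simp add: w_def)
  have "h 1 < h w" using r(2)[of "r/2"] r(1) by (simp add: w_def)
  moreover have "h 1 = 0" by (simp add: h_def a_def)
  ultimately have hw: "0 < w * exp a - w - exp (e w) + 1" by (simp add: h_def)
  have ew: "0 \<le> e w" using nn w1 by simp
  have g1: "1 \<le> 1 + (1 / w) * (exp (e w) - 1)" using ew w1 by simp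
  have "1 + (1 / w) * (exp (e w) - 1) < exp a"
  proof -
    have "w * (1 + (1 / w) * (exp (e w) - 1)) = w + exp (e w) - 1" using w1 by (simp add: field_simps)
    also have "\<dots> < w * exp a" using hw by simp
    finally show ?thesis using w1 by simp
  qed
  then have "ln (1 + (1 / w) * (exp (e w) - 1)) < a"
    using g1 by (metis exp_gt_zero ln_exp ln_less_cancel_iff order_less_le_trans zero_less_one)
  then show ?thesis using w1 a_def by blast
qed

theorem proposition2:
  fixes X :: "(real ^ 'd) set"
    and M :: "(real \<times> (real ^ 'd)) set \<Rightarrow> 'y measure"
    and eps eps' :: "real \<Rightarrow> real ^ 'd \<Rightarrow> real"
  assumes mech: "\<And>S. weighted_dataset X S \<Longrightarrow> prob_space (M S)"
    and profile: "weighted_profile X M eps"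
    and nonneg: "\<And>w x. 1 \<le> w \<Longrightarrow> x \<in> X \<Longrightarrow> 0 \<le> eps w x"
    and deriv: "\<And>w x. 1 \<le> w \<Longrightarrow> x \<in> X \<Longrightarrow>
                  ((\<lambda>v. eps v x) has_real_derivative eps' w x) (at w within {1..})"
  shows "\<exists>q :: real ^ 'd \<Rightarrow> real.
           (\<forall>x \<in> X. 0 < q x \<and> q x \<le> 1) \<and>
           (\<forall>x \<in> X. eps' 1 x < 1 - exp (- eps 1 x) \<longrightarrow>
              ln (1 + q x * (exp (eps (1 / q x) x) - 1)) < eps 1 x)"
proof -
  define P where "P = (\<lambda>x w. w > 1 \<and> ln (1 + (1 / w) * (exp (eps w x) - 1)) < eps 1 x)"
  have ex: "\<exists>w. P x w" if "x \<in> X" "eps' 1 x < 1 - exp (- eps 1 x)" for x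
    using key[of "\<lambda>v. eps v x" "eps' 1 x"] nonneg[OF _ that(1)] deriv[OF _ that(1)] that(2)
    unfolding P_def by auto
  define W where "W = (\<lambda>x. if x \<in> X \<and> eps' 1 x < 1 - exp (- eps 1 x) then (SOME w. P x w) else 1)"
  have WP: "P x (W x)" if "x \<in> X" "eps' 1 x < 1 - exp (- eps 1 x)" for x
    using someI_ex[OF ex[OF that]] that by (simp add: W_def)
  have W1: "W x \<ge> 1" if "x \<in> X" for x
    using WP[OF that] by (cases "eps' 1 x < 1 - exp (- eps 1 x)") (auto simp: W_def P_def)
  show ?thesis
  proof (intro exI[of _ "\<lambda>x. 1 / W x"] conjI ballI impI)
    fix x assume "x \<in> X" then show "0 < 1 / W x" "1 / W x \<le> 1" using W1[OF \<open>x \<in> X\<close>] by auto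
  next
    fix x assume "x \<in> X" "eps' 1 x < 1 - exp (- eps 1 x)"
    then show "ln (1 + 1 / W x * (exp (eps (1 / (1 / W x)) x) - 1)) < eps 1 x"
      using WP[of x] by (simp add: P_def)
  qed
qed

end
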